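(* Assume $\mathrm{recc}(C)\subseteq\mathrm{recc}(P^B)$. For every $k\in N_2$, $$S_k^C=\{\bar x\}+\mathrm{conv}\Big(\bigcup_{j\in N_1\cup N_2}\{\lambda\bar r^j:\alpha_j<\lambda<\beta_j\}\Big)+\{\lambda\bar r^k:\lambda\le0\}+\mathrm{recc}(C).$$
   Context: Let $A\in\mathbb{R}^{m\times n}$ have full row rank, $b\in\mathbb{R}^m$, and $P=\{x\in\mathbb{R}^n_+:Ax=b\}$. Let $C\subseteq\mathbb{R}^n$ be an open convex set. Fix a basis $B$ of $P$ with nonbasic set $N=\{1,\dots,n\}\setminus B$. Write $P=\{x:x_i=\bar b_i-\sum_{j\in N}\bar a_{ij}x_j\ (i\in B),\ x\ge0\}$ with $\bar b\ge0$. The basic solution $\bar x$ has $\bar x_i=\bar b_i$ ($i\in B$) and $0$ ($i\in N$). $P^B$ is obtained by dropping $x_i\ge0$ for $i\in B$. For $j\in N$, $\bar r^j$ has $\bar r^j_k=-\bar a_{kj}$ ($k\in B$), $\bar r^j_j=1$, and $0$ otherwise. Thus $P^B=\{\bar x+\sum_{j\in N}x_j\bar r^j:x_j\ge0\}$. It is assumed that $\bar x\notin\mathrm{cl}(C)$. For $j\in N$, $\alpha_j=\inf\{\lambda\ge0:\bar x+\lambda\bar r^j\in C\}$ and $\beta_j=\sup\{\lambda\ge0:\bar x+\lambda\bar r^j\in C\}$, with $\alpha_j=+\infty$, $\beta_j=-\infty$ if the halfline misses $C$. Define - $N_1=\{j:\alpha_j\in(0,\infty),\beta_j=+\infty\}$;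 - $N_2=\{j:\alpha_j\in(0,\infty),\beta_j\in(\alpha_j,\infty)\}$. For a set $K$, $\mathrm{recc}(K)=\{d:x+\lambda d\in K\ \forall x\in K,\lambda\ge0\}$. For $k\in N_2$, $S_k^C=\{\bar x\}+\mathrm{conv}\big(\bigcup_{j\in N_2}\{\lambda\bar r^j:0\le\lambda<\beta_j\}\big)+\{\lambda\bar r^k:\lambda\le0\}+\mathrm{recc}(C)$. *)

theory Defs
  imports "HOL-Analysis.Analysis"
begin

definition recc :: "('a::real_vector) set \<Rightarrow> 'a set" where
  "recc K = {d. \<forall>x\<in>K. \<forall>t::real. t \<ge> 0 \<longrightarrow> x + t *\<^sub>R d \<in> K}"

definition basic_solution :: "real^'n^'m \<Rightarrow> real^'m \<Rightarrow> 'n set \<Rightarrow> real^'n" where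
  "basic_solution A b B = (THE x. A *v x = b \<and> (\<forall>j. j \<notin> B \<longrightarrow> x $ j = 0))"

definition is_basis :: "real^'n^'m \<Rightarrow> 'n set \<Rightarrow> bool" where
  "is_basis A B \<longleftrightarrow> card B = CARD('m) \<and>
     (\<forall>x. A *v x = 0 \<and> (\<forall>j. j \<notin> B \<longrightarrow> x $ j = 0) \<longrightarrow> x = 0)"

definition is_feasible_basis :: "real^'n^'m \<Rightarrow> real^'m \<Rightarrow> 'n set \<Rightarrow> bool" where
  "is_feasible_basis A b B \<longleftrightarrow> is_basis A B \<and> (\<forall>i. basic_solution A b B $ i \<ge> 0)"

text \<open>The ray r^j (j nonbasic): r^j_k = -abar_kj for k in B, r^j_j = 1, 0 on other
  nonbasic coordinates; equivalently the unique such vector in the kernel of A.\<close>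
definition ray :: "real^'n^'m \<Rightarrow> 'n set \<Rightarrow> 'n \<Rightarrow> real^'n" where
  "ray A B j = (THE r. A *v r = 0 \<and> r $ j = 1 \<and> (\<forall>l. l \<notin> B \<and> l \<noteq> j \<longrightarrow> r $ l = 0))"

definition PB :: "real^'n^'m \<Rightarrow> real^'m \<Rightarrow> 'n set \<Rightarrow> (real^'n) set" where
  "PB A b B = {x. A *v x = b \<and> (\<forall>j. j \<notin> B \<longrightarrow> x $ j \<ge> 0)}"

text \<open>alpha and beta with conventions inf {} = +inf, sup {} = -inf.\<close>
definition alpha :: "('a::real_vector) set \<Rightarrow> 'a \<Rightarrow> 'a \<Rightarrow> ereal" where
  "alpha C x r = Inf (ereal ` {t. t \<ge> 0 \<and> x + t *\<^sub>R r \<in> C})"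

definition beta :: "('a::real_vector) set \<Rightarrow> 'a \<Rightarrow> 'a \<Rightarrow> ereal" where
  "beta C x r = Sup (ereal ` {t. t \<ge> 0 \<and> x + t *\<^sub>R r \<in> C})"

definition N1 :: "real^'n^'m \<Rightarrow> real^'m \<Rightarrow> 'n set \<Rightarrow> (real^'n) set \<Rightarrow> 'n set" where
  "N1 A b B C = {j. j \<notin> B \<and>
     0 < alpha C (basic_solution A b B) (ray A B j) \<and>
     alpha C (basic_solution A b B) (ray A B j) < \<infinity> \<and>
     beta C (basic_solution A b B) (ray A B j) = \<infinity>}"

definition N2 :: "real^'n^'m \<Rightarrow> real^'m \<Rightarrow> 'n set \<Rightarrow> (real^'n) set \<Rightarrow> 'n set" where
  "N2 A b B C = {j. j \<notin> B \<and>
     0 < alpha C (basic_solution A b B) (ray A B j) \<and>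
     alpha C (basic_solution A b B) (ray A B j) < \<infinity> \<and>
     alpha C (basic_solution A b B) (ray A B j) < beta C (basic_solution A b B) (ray A B j) \<and>
     beta C (basic_solution A b B) (ray A B j) < \<infinity>}"

definition S_set :: "real^'n^'m \<Rightarrow> real^'m \<Rightarrow> 'n set \<Rightarrow> (real^'n) set \<Rightarrow> 'n \<Rightarrow> (real^'n) set" where
  "S_set A b B C k =
    {basic_solution A b B + u + v + w | u v w.
       u \<in> convex hull (\<Union>j\<in>N2 A b B C.
              {t *\<^sub>R ray A B j | t. 0 \<le> t \<and> ereal t < beta C (basic_solution A b B) (ray A B j)})
     \<and> v \<in> {t *\<^sub>R ray A B k | t. t \<le> 0}
     \<and> w \<in> recc C}"

end

theory Submission
  imports Defs
begin

lemma recc_zero: "0 \<in> recc C" by (simp add: recc_def)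

lemma recc_add: assumes "d1 \<in> recc C" "d2 \<in> recc C" shows "d1 + d2 \<in> recc C"
  unfolding recc_def
proof (intro CollectI ballI allI impI)
  fix x and t :: real assume "x \<in> C" "0 \<le> t"
  then have "(x + t *\<^sub>R d1) + t *\<^sub>R d2 \<in> C" using assms unfolding recc_def by blast
  then show "x + t *\<^sub>R (d1 + d2) \<in> C" by (simp add: algebra_simps)
qed

lemma recc_scale: "d \<in> recc C \<Longrightarrow> (c::real) \<ge> 0 \<Longrightarrow> c *\<^sub>R d \<in> recc C"
  unfolding recc_def
proof (intro CollectI ballI allI impI)
  fix x t assume a: "d \<in> {d. \<forall>x\<in>C. \<forall>t::real. t \<ge> 0 \<longrightarrow> x + t *\<^sub>R d \<in> C}" "c \<ge> 0" "x \<in> C" "(0::real) \<le> t"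
  then have "x + (t*c) *\<^sub>R d \<in> C" by simp
  then show "x + t *\<^sub>R (c *\<^sub>R d) \<in> C" by simp
qed

lemma recc_convex: assumes "convex C" shows "convex (recc C)"
  unfolding convex_def
proof (intro ballI allI impI)
  fix d1 d2 and u v :: real assume d: "d1 \<in> recc C" "d2 \<in> recc C" and uv: "0 \<le> u" "0 \<le> v" "u + v = 1"
  show "u *\<^sub>R d1 + v *\<^sub>R d2 \<in> recc C" unfolding recc_def
  proof (intro CollectI ballI allI impI)
    fix x and t :: real assume "x \<in> C" "0 \<le> t"
    then have "x + t *\<^sub>R d1 \<in> C" "x + t *\<^sub>R d2 \<in> C" using d by (auto simp: recc_def)
    then have "u *\<^sub>R (x + t *\<^sub>R d1) + v *\<^sub>R (x + t *\<^sub>R d2) \<in> C"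
      using convexD[OF assms _ _ uv] by blast
    moreover have "u *\<^sub>R (x + t *\<^sub>R d1) + v *\<^sub>R (x + t *\<^sub>R d2) = (u+v) *\<^sub>R x + t *\<^sub>R (u *\<^sub>R d1 + v *\<^sub>R d2)"
      by (simp add: algebra_simps)
    ultimately show "x + t *\<^sub>R (u *\<^sub>R d1 + v *\<^sub>R d2) \<in> C" using uv by simp
  qed
qed

lemma recc_unbounded:
  fixes C :: "'a::real_normed_vector set"
  assumes "open C" "convex C" and unb: "\<And>M. \<exists>s. s > M \<and> x + s *\<^sub>R d \<in> C"
  shows "d \<in> recc C"
  unfolding recc_def
proof (intro CollectI ballI allI impI)
  fix y and t :: real assume y: "y \<in> C" and t: "0 \<le> t"
  show "y + t *\<^sub>R d \<in> C"
  proof (cases "t = 0")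
    case True then show ?thesis using y by simp
  next
    case False
    then have tp: "t > 0" using t by simp
    obtain e where e: "e > 0" "ball y e \<subseteq> C" using assms(1) y open_contains_ball by blast
    obtain s where s: "s > t + t * norm (y - x) / e" "x + s *\<^sub>R d \<in> C"
      using unb by blast
    have "t * norm (y - x) / e \<ge> 0" using t e by simp
    then have st: "s > t" using s by linarith
    define w where "w = y + (t/(s-t)) *\<^sub>R (y - x)"
    have "t * norm (y - x) / e < s - t" using s by linarith
    then have "t * norm (y - x) < (s - t) * e" using e by (simp add: field_simps)
    then have "t * norm (y - x) / (s - t) < e" using st by (simp add: field_simps)
    then have "dist y w < e" using st t by (simp add: w_def dist_norm)
    then have wC: "w \<in> C" using e by auto
    have "(1 - t/s) *\<^sub>R w + (t/s) *\<^sub>R (x + s *\<^sub>R d) \<in> C"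
      using convexD[OF assms(2) wC s(2)] st tp by simp
    moreover have "(1 - t/s) *\<^sub>R w + (t/s) *\<^sub>R (x + s *\<^sub>R d) = y + t *\<^sub>R d"
    proof -
      have c1: "(1 - t/s) * (t/(s-t)) = t/s" using st tp by (simp add: field_simps)
      have c2: "(t/s) * s = t" using st tp by simp
      have "(1 - t/s) *\<^sub>R w = (1 - t/s) *\<^sub>R y + ((1 - t/s) * (t/(s-t))) *\<^sub>R (y - x)"
        by (simp add: w_def scaleR_add_right)
      also have "\<dots> = (1 - t/s) *\<^sub>R y + (t/s) *\<^sub>R (y - x)" using c1 by simp
      finally have "(1 - t/s) *\<^sub>R w = y - (t/s) *\<^sub>R x" by (simp add: algebra_simps)
      moreover have "(t/s) *\<^sub>R (x + s *\<^sub>R d) = (t/s) *\<^sub>R x + t *\<^sub>R d"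
        using c2 by (simp add: scaleR_add_right)
      ultimately show ?thesis by simp
    qed
    ultimately show ?thesis by simp
  qed
qed

lemma main_abstract:
  fixes r :: "'j \<Rightarrow> 'a::real_vector" and al be :: "'j \<Rightarrow> ereal" and R :: "'a set"
  assumes Rc: "convex R" and R0: "0 \<in> R" and Radd: "\<And>a b. a \<in> R \<Longrightarrow> b \<in> R \<Longrightarrow> a + b \<in> R"
    and Rs: "\<And>d c. d \<in> R \<Longrightarrow> (c::real) \<ge> 0 \<Longrightarrow> c *\<^sub>R d \<in> R"
    and M1: "\<And>j. j \<in> M1 \<Longrightarrow> r j \<in> R \<and> 0 < al j"
    and M2: "\<And>j. j \<in> M2 \<Longrightarrow> 0 < al j \<and> al j < be j"
    and k: "k \<in> M2"
  shows "{x + u + v + w | u v w.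
       u \<in> convex hull (\<Union>j\<in>M2. {t *\<^sub>R r j | t. 0 \<le> t \<and> ereal t < be j})
     \<and> v \<in> {t *\<^sub>R r k | t. t \<le> 0} \<and> w \<in> R} =
    {x + u + v + w | u v w.
       u \<in> convex hull (\<Union>j\<in>M1 \<union> M2. {t *\<^sub>R r j | t. al j < ereal t \<and> ereal t < be j})
     \<and> v \<in> {t *\<^sub>R r k | t. t \<le> 0} \<and> w \<in> R}"
proof -
  define G2 where "G2 = (\<Union>j\<in>M2. {t *\<^sub>R r j | t. 0 \<le> t \<and> ereal t < be j})"
  define G where "G = (\<Union>j\<in>M1 \<union> M2. {t *\<^sub>R r j | t. al j < ereal t \<and> ereal t < be j})"
  define K where "K = {t *\<^sub>R r k | t. t \<le> 0}"
  have Kadd: "a + b \<in> K" if ab: "a \<in> K" "b \<in> K" for a b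
  proof -
    obtain t1 t2 where "a = t1 *\<^sub>R r k" "t1 \<le> 0" "b = t2 *\<^sub>R r k" "t2 \<le> 0"
      using ab unfolding K_def by blast
    then show ?thesis unfolding K_def by (intro CollectI exI[of _ "t1 + t2"]) (simp add: scaleR_add_left)
  qed
  have Kc: "convex K" unfolding convex_def
  proof (intro ballI allI impI)
    fix a b and u v :: real assume ab: "a \<in> K" "b \<in> K" and uv: "0 \<le> u" "0 \<le> v" "u + v = 1"
    obtain t1 t2 where tt: "a = t1 *\<^sub>R r k" "t1 \<le> 0" "b = t2 *\<^sub>R r k" "t2 \<le> 0"
      using ab unfolding K_def by blast
    show "u *\<^sub>R a + v *\<^sub>R b \<in> K" unfolding K_def
      by (intro CollectI exI[of _ "u * t1 + v * t2"])
        (use tt uv in \<open>simp add: scaleR_add_left mult_nonneg_nonpos add_nonpos_nonpos\<close>)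
  qed
  have k2: "0 < al k" "al k < be k" using M2 k by auto
  have inc1: "convex hull G \<subseteq> {a + b | a b. a \<in> convex hull G2 \<and> b \<in> R}"
  proof (rule hull_minimal)
    show "convex {a + b | a b. a \<in> convex hull G2 \<and> b \<in> R}"
      proof -
      have "{a + b | a b. a \<in> convex hull G2 \<and> b \<in> R} = (\<Union>x\<in> convex hull G2. \<Union>y \<in> R. {x + y})" by blast
      then show ?thesis using convex_sums[OF convex_convex_hull Rc] by simp
    qed
    show "G \<subseteq> {a + b | a b. a \<in> convex hull G2 \<and> b \<in> R}"
    proof
      fix g assume "g \<in> G"
      then obtain j t where j: "j \<in> M1 \<union> M2" "al j < ereal t" "ereal t < be j" "g = t *\<^sub>R r j"
        unfolding G_def by blast
      show "g \<in> {a + b | a b. a \<in> convex hull G2 \<and> b \<in> R}"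
      proof (cases "j \<in> M2")
        case True
        then have "0 < al j" using M2 by blast
        then have "0 \<le> t" using j(2) by (metis ereal_less_eq(5) less_imp_le order.strict_trans1 not_le zero_ereal_def)
        then have "g \<in> G2" unfolding G2_def using True j by blast
        then have "g \<in> convex hull G2" by (rule hull_inc)
        then show ?thesis using R0 by (intro CollectI exI[of _ g] exI[of _ 0]) simp
      next
        case False
        then have jM1: "j \<in> M1" using j by blast
        then have "0 < al j" "r j \<in> R" using M1 by auto
        then have "0 \<le> t" using j(2) by (metis ereal_less_eq(5) less_imp_le order.strict_trans1 not_le zero_ereal_def)
        then have gR: "g \<in> R" using Rs \<open>r j \<in> R\<close> j(4) by blast
        have "ereal 0 < be k" using k2 by (simp add: zero_ereal_def)
        then have "0 *\<^sub>R r k \<in> G2" unfolding G2_def using k by blast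
        then have "0 \<in> convex hull G2" by (simp add: hull_inc)
        then show ?thesis using gR by (intro CollectI exI[of _ 0] exI[of _ g]) simp
      qed
    qed
  qed
  have inc2: "convex hull G2 \<subseteq> {a + b | a b. a \<in> convex hull G \<and> b \<in> K}"
  proof (rule hull_minimal)
    show "convex {a + b | a b. a \<in> convex hull G \<and> b \<in> K}"
      proof -
      have "{a + b | a b. a \<in> convex hull G \<and> b \<in> K} = (\<Union>x\<in> convex hull G. \<Union>y \<in> K. {x + y})" by blast
      then show ?thesis using convex_sums[OF convex_convex_hull Kc] by simp
    qed
    show "G2 \<subseteq> {a + b | a b. a \<in> convex hull G \<and> b \<in> K}"
    proof
      fix g assume "g \<in> G2"
      then obtain j t where j: "j \<in> M2" "0 \<le> t" "ereal t < be j" "g = t *\<^sub>R r j"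
        unfolding G2_def by blast
      have K0: "0 \<in> K" unfolding K_def by (intro CollectI exI[of _ 0]) simp
      show "g \<in> {a + b | a b. a \<in> convex hull G \<and> b \<in> K}"
      proof (cases "al j < ereal t")
        case True
        then have "g \<in> G" unfolding G_def using j by blast
        then have "g \<in> convex hull G" by (rule hull_inc)
        then show ?thesis using K0 by (intro CollectI exI[of _ g] exI[of _ 0]) simp
      next
        case False
        have jj: "0 < al j" "al j < be j" using M2 j(1) by auto
        obtain mu where mu: "al j < ereal mu" "ereal mu < be j" using ereal_dense2[OF jj(2)] by blast
        obtain nu where nu: "al k < ereal nu" "ereal nu < be k" using ereal_dense2[OF k2(2)] by blast
        have "ereal t < ereal mu" using False mu(1) by (meson not_less order.strict_trans1)
        then have tmu: "t < mu" by simp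
        have "ereal 0 < ereal nu" using k2(1) nu(1) by (metis order.strict_trans zero_ereal_def)
        then have nup: "nu > 0" by simp
        have mup: "mu > 0" using tmu j(2) by simp
        define th where "th = t / mu"
        have th: "0 \<le> th" "th \<le> 1" using tmu j(2) mup by (auto simp: th_def)
        have "mu *\<^sub>R r j \<in> G" unfolding G_def using j(1) mu by blast
        moreover have "nu *\<^sub>R r k \<in> G" unfolding G_def using k nu by blast
        ultimately have aG: "th *\<^sub>R (mu *\<^sub>R r j) + (1 - th) *\<^sub>R (nu *\<^sub>R r k) \<in> convex hull G"
          using th by (intro convexD[OF convex_convex_hull]) (auto simp: hull_inc)
        have bK: "(- ((1 - th) * nu)) *\<^sub>R r k \<in> K" unfolding K_def using th nup
          by (intro CollectI exI[of _ "- ((1 - th) * nu)"]) simp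
        have "th * mu = t" using mup by (simp add: th_def)
        then have "th *\<^sub>R (mu *\<^sub>R r j) + (1 - th) *\<^sub>R (nu *\<^sub>R r k) + (- ((1 - th) * nu)) *\<^sub>R r k = g"
          using j(4) by (simp add: algebra_simps)
        then show ?thesis using aG bK by blast
      qed
    qed
  qed
  have "{x + u + v + w | u v w. u \<in> convex hull G2 \<and> v \<in> K \<and> w \<in> R} =
        {x + u + v + w | u v w. u \<in> convex hull G \<and> v \<in> K \<and> w \<in> R}"
  proof (intro equalityI subsetI)
    fix z assume "z \<in> {x + u + v + w | u v w. u \<in> convex hull G2 \<and> v \<in> K \<and> w \<in> R}"
    then obtain u v w where z: "z = x + u + v + w" "u \<in> convex hull G2" "v \<in> K" "w \<in> R" by blast
    then obtain a b where ab: "u = a + b" "a \<in> convex hull G" "b \<in> K" using inc2 by blast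
    have "z = x + a + (b + v) + w" using z ab by (simp add: algebra_simps)
    then show "z \<in> {x + u + v + w | u v w. u \<in> convex hull G \<and> v \<in> K \<and> w \<in> R}"
      using ab Kadd z by blast
  next
    fix z assume "z \<in> {x + u + v + w | u v w. u \<in> convex hull G \<and> v \<in> K \<and> w \<in> R}"
    then obtain u v w where z: "z = x + u + v + w" "u \<in> convex hull G" "v \<in> K" "w \<in> R" by blast
    then obtain a b where ab: "u = a + b" "a \<in> convex hull G2" "b \<in> R" using inc1 by blast
    have "z = x + a + v + (b + w)" using z ab by (simp add: algebra_simps)
    then show "z \<in> {x + u + v + w | u v w. u \<in> convex hull G2 \<and> v \<in> K \<and> w \<in> R}"
      using ab Radd z by blast
  qed
  then show ?thesis unfolding G_def G2_def K_def .
qed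

theorem proposition5:
  fixes A :: "real^'n^'m" and b :: "real^'m" and B :: "'n set" and C :: "(real^'n) set"
  assumes "rank A = CARD('m)"
    and "is_feasible_basis A b B"
    and "open C" and "convex C"
    and "basic_solution A b B \<notin> closure C"
    and "recc C \<subseteq> recc (PB A b B)"
    and "k \<in> N2 A b B C"
  shows "S_set A b B C k =
    {basic_solution A b B + u + v + w | u v w.
       u \<in> convex hull (\<Union>j\<in>N1 A b B C \<union> N2 A b B C.
              {t *\<^sub>R ray A B j | t. alpha C (basic_solution A b B) (ray A B j) < ereal t
                  \<and> ereal t < beta C (basic_solution A b B) (ray A B j)})
     \<and> v \<in> {t *\<^sub>R ray A B k | t. t \<le> 0}
     \<and> w \<in> recc C}"
proof -
  let ?x = "basic_solution A b B"
  have unb: "\<exists>s. s > M \<and> ?x + s *\<^sub>R d \<in> C" if "beta C ?x d = \<infinity>" for M d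
  proof (rule ccontr)
    assume "\<not> ?thesis"
    then have "\<forall>s\<in>{t. t \<ge> 0 \<and> ?x + t *\<^sub>R d \<in> C}. ereal s \<le> ereal M" using not_less by fastforce
    then have "beta C ?x d \<le> ereal M" unfolding beta_def by (auto intro: Sup_least)
    then show False using that by simp
  qed
  show ?thesis
    unfolding S_set_def
  proof (rule main_abstract)
    show "convex (recc C)" using assms(4) by (rule recc_convex)
    show "0 \<in> recc C" by (rule recc_zero)
    show "\<And>a b. a \<in> recc C \<Longrightarrow> b \<in> recc C \<Longrightarrow> a + b \<in> recc C" by (rule recc_add)
    show "\<And>d c. d \<in> recc C \<Longrightarrow> (c::real) \<ge> 0 \<Longrightarrow> c *\<^sub>R d \<in> recc C" by (rule recc_scale)
    show "k \<in> N2 A b B C" by (rule assms(7))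
    show "\<And>j. j \<in> N2 A b B C \<Longrightarrow> 0 < alpha C ?x (ray A B j) \<and> alpha C ?x (ray A B j) < beta C ?x (ray A B j)"
      unfolding N2_def by blast
    fix j assume j: "j \<in> N1 A b B C"
    then have "beta C ?x (ray A B j) = \<infinity>" "0 < alpha C ?x (ray A B j)" unfolding N1_def by auto
    then show "ray A B j \<in> recc C \<and> 0 < alpha C ?x (ray A B j)"
      using recc_unbounded[OF assms(3,4)] unb by blast
  qed
qed

end
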